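(* Let $\mathrm U\ge0$, $h_b\in[0,1/2]$ and $k\in\mathbb T^2$. If $\lambda\in\rho(A_{1,1}(\mathrm U,k))$ is an eigenvalue of $A(\mathrm U,k)$, then its eigenspace is $\mathbb C\,g(k,\lambda)$, where $$g(k,\lambda):=\big(\hat\upsilon(k)(A_{1,1}(\mathrm U,k)-\lambda\mathfrak 1)^{-1}\mathfrak d(k),\,-1\big)\in\mathcal H.$$ In particular $\lambda$ is a non-degenerate eigenvalue of $A(\mathrm U,k)$.
   Context: Notation: $\mathbb T^2=[-\pi,\pi)^2$ with normalized Haar measure $\nu$; $L^2(\mathbb T^2)=L^2(\mathbb T^2,\nu)$, scalar product antilinear in the first argument. For $f\in\ell^1(\mathbb Z^2)$, $\hat f(k)=\sum_{x}e^{ik\cdot x}f(x)$, $k\in\mathbb R^2$. $\hat{\mathfrak e}_x(p)=e^{ip\cdot x}$; $P_x$ the orthogonal projection onto $\mathbb C\hat{\mathfrak e}_x$; $M_g$ multiplication by $g$; $\cos(q):=\cos q_1+\cos q_2$; $\rho(\cdot)$ denotes the resolvent set. Data: $\epsilon,h_b,\mathrm U\ge0$; $\mathrm u:\mathbb Z^2\to[0,\infty)$, $\upsilon,\mathfrak p_1,\mathfrak p_2:\mathbb Z^2\to\mathbb R$, all invariant under $90^\circ$-rotations, $\mathrm u,\upsilon$ absolutely summable, $\sum_z e^{\alpha_0|z|}|\mathfrak p_j(z)|<\infty$ for some $\alpha_0>0$, $\mathfrak p_2(z)=0$ for $z\notin(2\mathbb Z)^2$, $\mathfrak p_1+\mathfrak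 p_2\neq0$, and for every $k$ some $x$ with $\mathfrak p_2(x)\neq-e^{ik\cdot x/2}\mathfrak p_1(x)$. For $k,p\in\mathbb T^2$: $\mathfrak b(k)=h_b\epsilon(2-\cos k)$, $\mathfrak f(k)(p)=\epsilon(4-\cos(p+k)-\cos p)$, $\mathfrak d(k)(p)=\hat{\mathfrak p}_1(k+p)+\hat{\mathfrak p}_2(k/2+p)$. $A_{1,1}(\mathrm U,k)=M_{\mathfrak f(k)}+\sum_x\mathrm u(x)P_x+\mathrm UP_0$; on $\mathcal H=L^2(\mathbb T^2)\oplus\mathbb C$, $A(\mathrm U,k)(\varphi,z)=\big(A_{1,1}(\mathrm U,k)\varphi+\hat\upsilon(k)z\,\mathfrak d(k),\ \hat\upsilon(k)\langle\mathfrak d(k),\varphi\rangle+\mathfrak b(k)z\big)$. *)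

theory Defs
  imports "HOL-Analysis.Analysis"
begin

type_synonym zvec = "int \<times> int"
type_synonym rvec = "real \<times> real"

text \<open>The torus [-pi,pi)^2 as a subset of R^2 (functions on T^2 are functions on R^2,
  only their values on this box matter).\<close>
definition Tbox :: "rvec set" where
  "Tbox = {-pi..<pi} \<times> {-pi..<pi}"

definition zdot :: "rvec \<Rightarrow> zvec \<Rightarrow> real" where
  "zdot k x = fst k * of_int (fst x) + snd k * of_int (snd x)"

definition znorm :: "zvec \<Rightarrow> real" where
  "znorm z = sqrt (of_int (fst z)^2 + of_int (snd z)^2)"

definition rot90 :: "zvec \<Rightarrow> zvec" where
  "rot90 z = (- snd z, fst z)"

definition rot_inv :: "(zvec \<Rightarrow> real) \<Rightarrow> bool" where
  "rot_inv f \<longleftrightarrow> (\<forall>x. f (rot90 x) = f x)"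

definition fhat :: "(zvec \<Rightarrow> real) \<Rightarrow> rvec \<Rightarrow> complex" where
  "fhat f k = (\<Sum>\<^sub>\<infinity>x. cis (zdot k x) * complex_of_real (f x))"

definition cos2 :: "rvec \<Rightarrow> real" where
  "cos2 q = cos (fst q) + cos (snd q)"

definition L2T :: "(rvec \<Rightarrow> complex) \<Rightarrow> bool" where
  "L2T \<phi> \<longleftrightarrow> \<phi> \<in> borel_measurable lborel \<and>
     set_integrable lborel Tbox (\<lambda>p. (cmod (\<phi> p))^2)"

definition innerT :: "(rvec \<Rightarrow> complex) \<Rightarrow> (rvec \<Rightarrow> complex) \<Rightarrow> complex" where
  "innerT f g = complex_of_real (1 / (4 * pi^2)) * (LINT p:Tbox|lborel. cnj (f p) * g p)"

definition normsqT :: "(rvec \<Rightarrow> complex) \<Rightarrow> real" where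
  "normsqT f = (1 / (4 * pi^2)) * (LINT p:Tbox|lborel. (cmod (f p))^2)"

definition eqT :: "(rvec \<Rightarrow> complex) \<Rightarrow> (rvec \<Rightarrow> complex) \<Rightarrow> bool" where
  "eqT f g \<longleftrightarrow> (AE p in lborel. p \<in> Tbox \<longrightarrow> f p = g p)"

definition ebas :: "zvec \<Rightarrow> rvec \<Rightarrow> complex" where
  "ebas x p = cis (zdot p x)"

definition projT :: "zvec \<Rightarrow> (rvec \<Rightarrow> complex) \<Rightarrow> rvec \<Rightarrow> complex" where
  "projT x \<phi> p = innerT (ebas x) \<phi> * ebas x p"

definition bfun :: "real \<Rightarrow> real \<Rightarrow> rvec \<Rightarrow> real" where
  "bfun hb \<epsilon> k = hb * \<epsilon> * (2 - cos2 k)"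

definition ffun :: "real \<Rightarrow> rvec \<Rightarrow> rvec \<Rightarrow> real" where
  "ffun \<epsilon> k p = \<epsilon> * (4 - cos2 (p + k) - cos2 p)"

definition dfun :: "(zvec \<Rightarrow> real) \<Rightarrow> (zvec \<Rightarrow> real) \<Rightarrow> rvec \<Rightarrow> rvec \<Rightarrow> complex" where
  "dfun p1 p2 k p = fhat p1 (k + p) + fhat p2 ((1/2) *\<^sub>R k + p)"

definition A11 :: "real \<Rightarrow> (zvec \<Rightarrow> real) \<Rightarrow> real \<Rightarrow> rvec
                    \<Rightarrow> (rvec \<Rightarrow> complex) \<Rightarrow> rvec \<Rightarrow> complex" where
  "A11 \<epsilon> u U k \<phi> p =
     complex_of_real (ffun \<epsilon> k p) * \<phi> p
     + (\<Sum>\<^sub>\<infinity>x. complex_of_real (u x) * projT x \<phi> p)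
     + complex_of_real U * projT (0,0) \<phi> p"

definition Afull :: "real \<Rightarrow> real \<Rightarrow> (zvec \<Rightarrow> real) \<Rightarrow> (zvec \<Rightarrow> real) \<Rightarrow> (zvec \<Rightarrow> real)
      \<Rightarrow> (zvec \<Rightarrow> real) \<Rightarrow> real \<Rightarrow> rvec
      \<Rightarrow> (rvec \<Rightarrow> complex) \<times> complex \<Rightarrow> (rvec \<Rightarrow> complex) \<times> complex" where
  "Afull \<epsilon> hb u \<upsilon> p1 p2 U k v =
     ((\<lambda>p. A11 \<epsilon> u U k (fst v) p + fhat \<upsilon> k * snd v * dfun p1 p2 k p),
      fhat \<upsilon> k * innerT (dfun p1 p2 k) (fst v) + complex_of_real (bfun hb \<epsilon> k) * snd v)"

text \<open>Resolvent set of A_{1,1}(U,k): A_{1,1} - lambda is a bijection of L^2(T^2)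
  with bounded inverse.\<close>
definition in_resolvent_A11 :: "real \<Rightarrow> (zvec \<Rightarrow> real) \<Rightarrow> real \<Rightarrow> rvec \<Rightarrow> complex \<Rightarrow> bool" where
  "in_resolvent_A11 \<epsilon> u U k lam \<longleftrightarrow>
     (\<forall>g. L2T g \<longrightarrow> (\<exists>\<phi>. L2T \<phi> \<and> eqT (\<lambda>p. A11 \<epsilon> u U k \<phi> p - lam * \<phi> p) g)) \<and>
     (\<exists>C. \<forall>\<phi>. L2T \<phi> \<longrightarrow> normsqT \<phi> \<le> C * normsqT (\<lambda>p. A11 \<epsilon> u U k \<phi> p - lam * \<phi> p))"

definition is_eigvec_A :: "real \<Rightarrow> real \<Rightarrow> (zvec \<Rightarrow> real) \<Rightarrow> (zvec \<Rightarrow> real) \<Rightarrow> (zvec \<Rightarrow> real)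
      \<Rightarrow> (zvec \<Rightarrow> real) \<Rightarrow> real \<Rightarrow> rvec \<Rightarrow> complex
      \<Rightarrow> (rvec \<Rightarrow> complex) \<times> complex \<Rightarrow> bool" where
  "is_eigvec_A \<epsilon> hb u \<upsilon> p1 p2 U k lam v \<longleftrightarrow>
     L2T (fst v) \<and>
     eqT (fst (Afull \<epsilon> hb u \<upsilon> p1 p2 U k v)) (\<lambda>p. lam * fst v p) \<and>
     snd (Afull \<epsilon> hb u \<upsilon> p1 p2 U k v) = lam * snd v"

definition is_eigenvalue_A :: "real \<Rightarrow> real \<Rightarrow> (zvec \<Rightarrow> real) \<Rightarrow> (zvec \<Rightarrow> real) \<Rightarrow> (zvec \<Rightarrow> real)
      \<Rightarrow> (zvec \<Rightarrow> real) \<Rightarrow> real \<Rightarrow> rvec \<Rightarrow> complex \<Rightarrow> bool" where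
  "is_eigenvalue_A \<epsilon> hb u \<upsilon> p1 p2 U k lam \<longleftrightarrow>
     (\<exists>v. is_eigvec_A \<epsilon> hb u \<upsilon> p1 p2 U k lam v \<and> \<not> (eqT (fst v) (\<lambda>_. 0) \<and> snd v = 0))"

end

theory Submission
  imports Defs
begin

lemma fhat_cont:
  assumes "(\<lambda>x. \<bar>f x\<bar>) summable_on UNIV"
  shows "continuous_on UNIV (fhat f)"
proof -
  have "uniform_limit UNIV (\<lambda>X y. \<Sum>x\<in>X. cis (zdot y x) * complex_of_real (f x))
     (\<lambda>y. \<Sum>\<^sub>\<infinity>x\<in>UNIV. cis (zdot y x) * complex_of_real (f x)) (finite_subsets_at_top UNIV)"
    by (rule Weierstrass_m_test_general[where M="\<lambda>x. \<bar>f x\<bar>"]) (auto simp: norm_mult assms)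
  then show ?thesis unfolding fhat_def
    by (rule uniform_limit_theorem[rotated]) (auto intro!: always_eventually continuous_intros simp: zdot_def)
qed

lemma Tbox_sets: "Tbox \<in> sets lborel"
  unfolding Tbox_def by (simp add: borel_prod[symmetric])

lemma Tbox_fin: "emeasure lborel Tbox < \<infinity>"
  unfolding Tbox_def by (intro emeasure_bounded_finite bounded_Times) auto

lemma cont_meas: "continuous_on UNIV (f::rvec \<Rightarrow> complex) \<Longrightarrow> f \<in> borel_measurable lborel"
  using borel_measurable_continuous_onI by simp

lemma ebas_meas: "ebas x \<in> borel_measurable lborel"
  unfolding ebas_def zdot_def by (intro cont_meas continuous_intros)


lemma sint_bound:
  assumes "set_integrable lborel Tbox (g::rvec\<Rightarrow>real)" "h \<in> borel_measurable lborel"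
    "\<And>p. norm (h p) \<le> g p"
  shows "set_integrable lborel Tbox (h :: rvec \<Rightarrow> 'b::{banach,second_countable_topology})"
proof -
  have b: "norm (indicator Tbox x *\<^sub>R h x) \<le> norm (indicator Tbox x *\<^sub>R g x)" for x
  proof (cases "x \<in> Tbox")
    case True
    have "norm (h x) \<le> g x" by (rule assms(3))
    then show ?thesis using True by simp
  qed simp
  have m: "(\<lambda>x. indicator Tbox x *\<^sub>R h x) \<in> borel_measurable lborel"
    using assms(2) Tbox_sets by measurable
  show ?thesis using assms(1) unfolding set_integrable_def
    by (rule Bochner_Integration.integrable_bound[OF _ m]) (rule always_eventually, use b in blast)
qed

lemma i1: "set_integrable lborel Tbox (\<lambda>p. (1::real))"
    unfolding set_integrable_def using Tbox_fin Tbox_sets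
    by simp


lemma L2T_L1:
  assumes "L2T \<phi>" shows "set_integrable lborel Tbox \<phi>"
proof -
  have a: "set_integrable lborel Tbox (\<lambda>p. (cmod (\<phi> p))^2)"
    using assms unfolding L2T_def by (rule conjunct2)
  have m: "\<phi> \<in> borel_measurable lborel"
    using assms unfolding L2T_def by (rule conjunct1)
  have b: "set_integrable lborel Tbox (\<lambda>p. 1 + (cmod (\<phi> p))^2)"
    by (rule set_integral_add(1)[OF i1 a])
  have c: "cmod (\<phi> p) \<le> 1 + (cmod (\<phi> p))^2" for p
  proof -
    have "0 \<le> (cmod (\<phi> p) - 1/2)^2" by simp
    thus ?thesis by (simp add: power2_eq_square algebra_simps)
  qed
  show ?thesis 
    by (rule sint_bound[where g="\<lambda>p. 1 + (cmod (\<phi> p))^2", OF b m c])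
qed


lemma sq_ineq: "((x::real) + c * y)^2 \<le> 2 * x^2 + (2 * c^2) * y^2"
proof -
  have "0 \<le> (x - c*y)^2" by simp
  thus ?thesis by (simp add: power2_eq_square algebra_simps)
qed

lemma L2T_comb:
  assumes "L2T \<phi>" "L2T \<psi>" shows "L2T (\<lambda>p. \<phi> p + a * \<psi> p)"
proof -
  have a1: "set_integrable lborel Tbox (\<lambda>p. (cmod (\<phi> p))^2)"
    using assms(1) unfolding L2T_def by (rule conjunct2)
  have m1: "\<phi> \<in> borel_measurable lborel"
    using assms(1) unfolding L2T_def by (rule conjunct1)
  have a2: "set_integrable lborel Tbox (\<lambda>p. (cmod (\<psi> p))^2)"
    using assms(2) unfolding L2T_def by (rule conjunct2)
  have m2: "\<psi> \<in> borel_measurable lborel"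
    using assms(2) unfolding L2T_def by (rule conjunct1)
  have m: "(\<lambda>p. \<phi> p + a * \<psi> p) \<in> borel_measurable lborel" using m1 m2 by measurable
  have mm: "(\<lambda>p. (cmod (\<phi> p + a * \<psi> p))^2) \<in> borel_measurable lborel" using m by measurable
  have b1: "set_integrable lborel Tbox (\<lambda>p. 2 * (cmod (\<phi> p))^2)"
    by (rule set_integrable_mult_right[OF a1])
  have b2: "set_integrable lborel Tbox (\<lambda>p. (2 * (cmod a)^2) * (cmod (\<psi> p))^2)"
    by (rule set_integrable_mult_right[OF a2])
  have b: "set_integrable lborel Tbox (\<lambda>p. 2 * (cmod (\<phi> p))^2 + (2 * (cmod a)^2) * (cmod (\<psi> p))^2)"
    by (rule set_integral_add(1)[OF b1 b2])
  have c: "norm ((cmod (\<phi> p + a * \<psi> p))^2) \<le> 2 * (cmod (\<phi> p))^2 + (2 * (cmod a)^2) * (cmod (\<psi> p))^2" for p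
  proof -
    have "cmod (\<phi> p + a * \<psi> p) \<le> cmod (\<phi> p) + cmod a * cmod (\<psi> p)"
      by (metis norm_mult norm_triangle_ineq)
    hence "(cmod (\<phi> p + a * \<psi> p))^2 \<le> (cmod (\<phi> p) + cmod a * cmod (\<psi> p))^2"
      by (simp add: power_mono)
    also have "\<dots> \<le> 2 * (cmod (\<phi> p))^2 + (2 * (cmod a)^2) * (cmod (\<psi> p))^2"
      by (rule sq_ineq)
    finally show ?thesis by simp
  qed
  have "set_integrable lborel Tbox (\<lambda>p. (cmod (\<phi> p + a * \<psi> p))^2)"
    by (rule sint_bound[OF b mm c])
  with m show ?thesis unfolding L2T_def by blast
qed

lemma L2T_meas: "L2T \<phi> \<Longrightarrow> \<phi> \<in> borel_measurable lborel"
  unfolding L2T_def by (rule conjunct1)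

lemma inner_int:
  assumes "L2T \<phi>" "g \<in> borel_measurable lborel" "\<And>p. cmod (g p) \<le> 1"
  shows "set_integrable lborel Tbox (\<lambda>p. cnj (g p) * \<phi> p)"
proof -
  have a: "set_integrable lborel Tbox (\<lambda>p. cmod (\<phi> p))"
    using L2T_L1[OF assms(1)] by (rule set_integrable_norm)
  have c0: "cnj \<in> borel_measurable borel"
    by (intro borel_measurable_continuous_onI continuous_intros)
  have m2: "(\<lambda>p. cnj (g p)) \<in> borel_measurable lborel"
    using measurable_compose[OF assms(2) c0] by simp
  have m1: "\<phi> \<in> borel_measurable lborel" by (rule L2T_meas[OF assms(1)])
  have m: "(\<lambda>p. cnj (g p) * \<phi> p) \<in> borel_measurable lborel"
    using m1 m2 by measurable
  have c: "norm (cnj (g p) * \<phi> p) \<le> cmod (\<phi> p)" for p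
    using assms(3)[of p] by (simp add: norm_mult mult_left_le_one_le)
  show ?thesis by (rule sint_bound[OF a m c])
qed

lemma ebas_norm: "cmod (ebas x p) = 1"
  unfolding ebas_def by simp

lemma inner_ebas_lin:
  assumes "L2T \<phi>" "L2T \<psi>"
  shows "innerT (ebas x) (\<lambda>p. \<phi> p + a * \<psi> p) = innerT (ebas x) \<phi> + a * innerT (ebas x) \<psi>"
proof -
  have i1: "set_integrable lborel Tbox (\<lambda>p. cnj (ebas x p) * \<phi> p)"
    by (rule inner_int[OF assms(1) ebas_meas]) (simp add: ebas_norm)
  have i2: "set_integrable lborel Tbox (\<lambda>p. cnj (ebas x p) * \<psi> p)"
    by (rule inner_int[OF assms(2) ebas_meas]) (simp add: ebas_norm)
  have i3: "set_integrable lborel Tbox (\<lambda>p. a * (cnj (ebas x p) * \<psi> p))"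
    by (rule set_integrable_mult_right[OF i2])
  have "(LINT p:Tbox|lborel. cnj (ebas x p) * (\<phi> p + a * \<psi> p))
      = (LINT p:Tbox|lborel. cnj (ebas x p) * \<phi> p + a * (cnj (ebas x p) * \<psi> p))"
    by (simp add: algebra_simps)
  also have "\<dots> = (LINT p:Tbox|lborel. cnj (ebas x p) * \<phi> p) + a * (LINT p:Tbox|lborel. cnj (ebas x p) * \<psi> p)"
    using set_integral_add(2)[OF i1 i3] by simp
  finally show ?thesis unfolding innerT_def by (simp add: algebra_simps)
qed

lemma inner_ebas_bound:
  assumes "L2T \<phi>"
  shows "cmod (innerT (ebas x) \<phi>) \<le> (1 / (4 * pi^2)) * (LINT p:Tbox|lborel. cmod (\<phi> p))"
proof -
  have i1: "set_integrable lborel Tbox (\<lambda>p. cnj (ebas x p) * \<phi> p)"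
    by (rule inner_int[OF assms(1) ebas_meas]) (simp add: ebas_norm)
  have "cmod (LINT p:Tbox|lborel. cnj (ebas x p) * \<phi> p) \<le> (LINT p:Tbox|lborel. cmod (cnj (ebas x p) * \<phi> p))"
    by (rule set_integral_norm_bound[OF i1])
  also have "\<dots> = (LINT p:Tbox|lborel. cmod (\<phi> p))"
    by (simp add: norm_mult ebas_norm)
  finally have le: "cmod (LINT p:Tbox|lborel. cnj (ebas x p) * \<phi> p) \<le> (LINT p:Tbox|lborel. cmod (\<phi> p))" .
  have "cmod (innerT (ebas x) \<phi>) = (1 / (4 * pi^2)) * cmod (LINT p:Tbox|lborel. cnj (ebas x p) * \<phi> p)"
    unfolding innerT_def norm_mult norm_of_real by simp
  also have "\<dots> \<le> (1 / (4 * pi^2)) * (LINT p:Tbox|lborel. cmod (\<phi> p))"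
    by (rule mult_left_mono[OF le]) simp
  finally show ?thesis .
qed


lemma sum_proj:
  assumes "L2T \<phi>" "(\<lambda>x. \<bar>u x\<bar>) summable_on UNIV"
  shows "(\<lambda>x. complex_of_real (u x) * projT x \<phi> p) summable_on UNIV"
proof -
  define B where "B = (1 / (4 * pi^2)) * (LINT p:Tbox|lborel. cmod (\<phi> p))"
  have s: "(\<lambda>x. \<bar>u x\<bar> * B) summable_on UNIV" by (rule summable_on_cmult_left[OF assms(2)])
  have "norm (complex_of_real (u x) * projT x \<phi> p) \<le> \<bar>u x\<bar> * B" for x
  proof -
    have "norm (complex_of_real (u x) * projT x \<phi> p) = \<bar>u x\<bar> * cmod (innerT (ebas x) \<phi>)"
      unfolding projT_def by (simp add: norm_mult ebas_norm)
    also have "\<dots> \<le> \<bar>u x\<bar> * B"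
      unfolding B_def by (rule mult_left_mono[OF inner_ebas_bound[OF assms(1)]]) simp
    finally show ?thesis .
  qed
  hence "(\<lambda>x. norm (complex_of_real (u x) * projT x \<phi> p)) summable_on UNIV"
    by (intro Infinite_Sum.abs_summable_on_comparison_test'[OF s])
  thus ?thesis by (rule abs_summable_summable)
qed

lemma projT_lin:
  assumes "L2T \<phi>" "L2T \<psi>"
  shows "projT x (\<lambda>p. \<phi> p + a * \<psi> p) p = projT x \<phi> p + a * projT x \<psi> p"
  unfolding projT_def inner_ebas_lin[OF assms] by (simp add: algebra_simps)

lemma A11_lin:
  assumes "L2T \<phi>" "L2T \<psi>" "(\<lambda>x. \<bar>u x\<bar>) summable_on UNIV"
  shows "A11 \<epsilon> u U k (\<lambda>p. \<phi> p + a * \<psi> p) p = A11 \<epsilon> u U k \<phi> p + a * A11 \<epsilon> u U k \<psi> p"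
proof -
  have s1: "(\<lambda>x. complex_of_real (u x) * projT x \<phi> p) summable_on UNIV" by (rule sum_proj[OF assms(1,3)])
  have s2: "(\<lambda>x. a * (complex_of_real (u x) * projT x \<psi> p)) summable_on UNIV"
    by (rule summable_on_cmult_right[OF sum_proj[OF assms(2,3)]])
  have "(\<Sum>\<^sub>\<infinity>x. complex_of_real (u x) * projT x (\<lambda>p. \<phi> p + a * \<psi> p) p)
     = (\<Sum>\<^sub>\<infinity>x. complex_of_real (u x) * projT x \<phi> p + a * (complex_of_real (u x) * projT x \<psi> p))"
    unfolding projT_lin[OF assms(1,2)] by (simp add: algebra_simps)
  also have "\<dots> = (\<Sum>\<^sub>\<infinity>x. complex_of_real (u x) * projT x \<phi> p) + (\<Sum>\<^sub>\<infinity>x. a * (complex_of_real (u x) * projT x \<psi> p))"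
    using infsum_add[OF s1 s2] by simp
  also have "\<dots> = (\<Sum>\<^sub>\<infinity>x. complex_of_real (u x) * projT x \<phi> p) + a * (\<Sum>\<^sub>\<infinity>x. complex_of_real (u x) * projT x \<psi> p)"
    using infsum_cmult_right'[of a "\<lambda>x. complex_of_real (u x) * projT x \<psi> p" UNIV] by simp
  finally have e: "(\<Sum>\<^sub>\<infinity>x. complex_of_real (u x) * projT x (\<lambda>p. \<phi> p + a * \<psi> p) p) = \<dots>" .
  show ?thesis unfolding A11_def e by (simp add: projT_lin[OF assms(1,2)] algebra_simps)
qed

lemma A11_null:
  assumes "AE p in lborel. p \<in> Tbox \<longrightarrow> w p = 0"
  shows "A11 \<epsilon> u U k w p = complex_of_real (ffun \<epsilon> k p) * w p"
proof -
  have "innerT g w = 0" for g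
  proof -
    have "AE p in lborel. indicator Tbox p *\<^sub>R (cnj (g p) * w p) = 0"
      using assms by eventually_elim (simp add: indicator_def)
    hence "(LINT p:Tbox|lborel. cnj (g p) * w p) = 0"
      unfolding set_lebesgue_integral_def by (rule integral_eq_zero_AE)
    thus ?thesis unfolding innerT_def by simp
  qed
  thus ?thesis unfolding A11_def projT_def by simp
qed

lemma dfun_meas:
  assumes "(\<lambda>x. \<bar>p1 x\<bar>) summable_on UNIV" "(\<lambda>x. \<bar>p2 x\<bar>) summable_on UNIV"
  shows "dfun p1 p2 k \<in> borel_measurable lborel"
proof -
  have c1: "continuous_on UNIV (fhat p1)" by (rule fhat_cont[OF assms(1)])
  have c2: "continuous_on UNIV (fhat p2)" by (rule fhat_cont[OF assms(2)])
  have "continuous_on UNIV (\<lambda>p. fhat p1 (k + p) + fhat p2 ((1/2) *\<^sub>R k + p))"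
    by (intro continuous_on_add continuous_on_compose2[OF c1] continuous_on_compose2[OF c2] continuous_intros) auto
  thus ?thesis unfolding dfun_def[abs_def] by (rule cont_meas)
qed


lemma normsq_AE0:
  assumes "AE p in lborel. p \<in> Tbox \<longrightarrow> w p = 0"
  shows "normsqT w = 0"
proof -
  have "AE p in lborel. indicator Tbox p *\<^sub>R (cmod (w p))^2 = 0"
    using assms by eventually_elim (simp add: indicator_def)
  hence "(LINT p:Tbox|lborel. (cmod (w p))^2) = 0"
    unfolding set_lebesgue_integral_def by (rule integral_eq_zero_AE)
  thus ?thesis unfolding normsqT_def by simp
qed

lemma normsq_zero:
  assumes "L2T w" "normsqT w \<le> 0"
  shows "AE p in lborel. p \<in> Tbox \<longrightarrow> w p = 0"
proof -
  define f where "f = (\<lambda>p. indicator Tbox p *\<^sub>R (cmod (w p))^2 :: real)"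
  have int: "integrable lborel f"
    using assms(1) unfolding L2T_def set_integrable_def f_def by (rule conjunct2)
  have nn: "\<And>p. 0 \<le> f p" unfolding f_def by (simp add: indicator_def)
  have I: "integral\<^sup>L lborel f = (LINT p:Tbox|lborel. (cmod (w p))^2)"
    unfolding f_def set_lebesgue_integral_def ..
  have "(1 / (4 * pi^2)) * integral\<^sup>L lborel f \<le> 0"
    using assms(2) unfolding normsqT_def I .
  hence "(1 / (4 * pi^2)) * integral\<^sup>L lborel f * (4 * pi^2) \<le> 0"
    by (rule mult_nonpos_nonneg) simp
  hence "integral\<^sup>L lborel f \<le> 0" by simp
  moreover have "0 \<le> integral\<^sup>L lborel f" by (rule integral_nonneg_AE) (simp add: nn)
  ultimately have "integral\<^sup>L lborel f = 0" by simp
  hence "AE p in lborel. f p = 0"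
    using integral_nonneg_eq_0_iff_AE[OF int] nn by simp
  thus ?thesis
    by eventually_elim (auto simp: f_def indicator_def)
qed

theorem corollary4p6:
  fixes \<epsilon> hb U :: real and u \<upsilon> p1 p2 :: "zvec \<Rightarrow> real"
    and k :: rvec and lam :: complex and \<psi> :: "rvec \<Rightarrow> complex"
  assumes eps: "\<epsilon> \<ge> 0" and hb: "0 \<le> hb" "hb \<le> 1/2" and U: "U \<ge> 0"
    and u_nonneg: "\<forall>x. u x \<ge> 0"
    and rot: "rot_inv u" "rot_inv \<upsilon>" "rot_inv p1" "rot_inv p2"
    and u_sum: "(\<lambda>x. \<bar>u x\<bar>) summable_on UNIV"
    and v_sum: "(\<lambda>x. \<bar>\<upsilon> x\<bar>) summable_on UNIV"
    and p_exp: "\<exists>\<alpha>0>0. (\<lambda>z. exp (\<alpha>0 * znorm z) * \<bar>p1 z\<bar>) summable_on UNIV \<and>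
                        (\<lambda>z. exp (\<alpha>0 * znorm z) * \<bar>p2 z\<bar>) summable_on UNIV"
    and p2_supp: "\<forall>z. \<not> (even (fst z) \<and> even (snd z)) \<longrightarrow> p2 z = 0"
    and p_nz: "\<exists>x. p1 x + p2 x \<noteq> 0"
    and p_cond: "\<forall>q\<in>Tbox. \<exists>x. complex_of_real (p2 x) \<noteq>
                    - cis (zdot q x / 2) * complex_of_real (p1 x)"
    and k: "k \<in> Tbox"
    and res: "in_resolvent_A11 \<epsilon> u U k lam"
    and eig: "is_eigenvalue_A \<epsilon> hb u \<upsilon> p1 p2 U k lam"
    and psi: "L2T \<psi>" "eqT (\<lambda>p. A11 \<epsilon> u U k \<psi> p - lam * \<psi> p) (dfun p1 p2 k)"
  shows "\<forall>\<phi> z. is_eigvec_A \<epsilon> hb u \<upsilon> p1 p2 U k lam (\<phi>, z) \<longleftrightarrow>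
            L2T \<phi> \<and> (\<exists>c::complex. eqT \<phi> (\<lambda>p. c * (fhat \<upsilon> k * \<psi> p)) \<and> z = c * (-1))"
proof -
  have usum: "(\<lambda>x. \<bar>u x\<bar>) summable_on UNIV" by (rule u_sum)
  obtain \<alpha> where al: "\<alpha> > 0" "(\<lambda>z. exp (\<alpha> * znorm z) * \<bar>p1 z\<bar>) summable_on UNIV"
     "(\<lambda>z. exp (\<alpha> * znorm z) * \<bar>p2 z\<bar>) summable_on UNIV" using p_exp by blast
  have zn: "0 \<le> znorm z" for z unfolding znorm_def by simp
  have ex1: "1 \<le> exp (\<alpha> * znorm z)" for z using al(1) zn[of z] by simp
  have p1s: "(\<lambda>x. \<bar>p1 x\<bar>) summable_on UNIV"
  proof (rule summable_on_comparison_test[OF al(2)])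
    fix x show "\<bar>p1 x\<bar> \<le> exp (\<alpha> * znorm x) * \<bar>p1 x\<bar>"
      using ex1[of x] by (simp add: mult_le_cancel_right1)
  qed simp
  have p2s: "(\<lambda>x. \<bar>p2 x\<bar>) summable_on UNIV"
  proof (rule summable_on_comparison_test[OF al(3)])
    fix x show "\<bar>p2 x\<bar> \<le> exp (\<alpha> * znorm x) * \<bar>p2 x\<bar>"
      using ex1[of x] by (simp add: mult_le_cancel_right1)
  qed simp
  have dm: "dfun p1 p2 k \<in> borel_measurable lborel" by (rule dfun_meas[OF p1s p2s])
  have psiL: "L2T \<psi>" by (rule psi(1))
  obtain C where C: "\<forall>\<phi>. L2T \<phi> \<longrightarrow> normsqT \<phi> \<le> C * normsqT (\<lambda>p. A11 \<epsilon> u U k \<phi> p - lam * \<phi> p)"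
    using res unfolding in_resolvent_A11_def by blast
  have fwd: "eqT \<phi> (\<lambda>p. (- z) * (fhat \<upsilon> k * \<psi> p))"
    if ev: "is_eigvec_A \<epsilon> hb u \<upsilon> p1 p2 U k lam (\<phi>, z)" for \<phi> z
  proof -
    have L: "L2T \<phi>" using ev unfolding is_eigvec_A_def by simp
    have E1: "AE p in lborel. p \<in> Tbox \<longrightarrow>
        A11 \<epsilon> u U k \<phi> p + fhat \<upsilon> k * z * dfun p1 p2 k p = lam * \<phi> p"
      using ev unfolding is_eigvec_A_def eqT_def Afull_def by simp
    have E2: "AE p in lborel. p \<in> Tbox \<longrightarrow> A11 \<epsilon> u U k \<psi> p - lam * \<psi> p = dfun p1 p2 k p"
      using psi(2) unfolding eqT_def by simp
    define a where "a = fhat \<upsilon> k * z"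
    define w where "w = (\<lambda>p. \<phi> p + a * \<psi> p)"
    have wL: "L2T w" unfolding w_def by (rule L2T_comb[OF L psiL])
    have lin: "A11 \<epsilon> u U k w p - lam * w p = (A11 \<epsilon> u U k \<phi> p - lam * \<phi> p) + a * (A11 \<epsilon> u U k \<psi> p - lam * \<psi> p)" for p
      unfolding w_def A11_lin[OF L psiL usum] by (simp add: algebra_simps)
    have "AE p in lborel. p \<in> Tbox \<longrightarrow> A11 \<epsilon> u U k w p - lam * w p = 0"
      using E1 E2 proof eventually_elim
      case (elim p) thus ?case unfolding lin a_def by (auto simp: algebra_simps)
    qed
    hence "normsqT (\<lambda>p. A11 \<epsilon> u U k w p - lam * w p) = 0" by (rule normsq_AE0)
    hence "normsqT w \<le> 0" using C wL by force
    hence "AE p in lborel. p \<in> Tbox \<longrightarrow> w p = 0" by (rule normsq_zero[OF wL])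
    thus ?thesis unfolding eqT_def
      by eventually_elim (auto simp: w_def a_def algebra_simps add_eq_0_iff2)
  qed
  show ?thesis
  proof (intro allI iffI)
    fix \<phi> z
    assume ev: "is_eigvec_A \<epsilon> hb u \<upsilon> p1 p2 U k lam (\<phi>, z)"
    show "L2T \<phi> \<and> (\<exists>c::complex. eqT \<phi> (\<lambda>p. c * (fhat \<upsilon> k * \<psi> p)) \<and> z = c * (-1))"
    proof (intro conjI exI[where x="-z"])
      show "L2T \<phi>" using ev unfolding is_eigvec_A_def by simp
      show "eqT \<phi> (\<lambda>p. (- z) * (fhat \<upsilon> k * \<psi> p))" by (rule fwd[OF ev])
      show "z = (- z) * (-1)" by simp
    qed
  next
    fix \<phi> z
    assume "L2T \<phi> \<and> (\<exists>c::complex. eqT \<phi> (\<lambda>p. c * (fhat \<upsilon> k * \<psi> p)) \<and> z = c * (-1))"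
    then obtain c where L: "L2T \<phi>" and Ec: "eqT \<phi> (\<lambda>p. c * (fhat \<upsilon> k * \<psi> p))" and zc: "z = c * (-1)"
      by blast
    obtain \<phi>0 z0 where ev0: "is_eigvec_A \<epsilon> hb u \<upsilon> p1 p2 U k lam (\<phi>0, z0)"
      and nz0: "\<not> (eqT \<phi>0 (\<lambda>_. 0) \<and> z0 = 0)"
      using eig unfolding is_eigenvalue_A_def by auto
    define c0 where "c0 = - z0"
    have E0: "eqT \<phi>0 (\<lambda>p. c0 * (fhat \<upsilon> k * \<psi> p))" unfolding c0_def by (rule fwd[OF ev0])
    have c0nz: "c0 \<noteq> 0"
    proof
      assume "c0 = 0"
      hence "eqT \<phi>0 (\<lambda>_. 0) \<and> z0 = 0" using E0 unfolding c0_def by simp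
      thus False using nz0 by blast
    qed
    have L0: "L2T \<phi>0" using ev0 unfolding is_eigvec_A_def by simp
    have S0: "fhat \<upsilon> k * innerT (dfun p1 p2 k) \<phi>0 + complex_of_real (bfun hb \<epsilon> k) * z0 = lam * z0"
      using ev0 unfolding is_eigvec_A_def Afull_def by simp
    have c0m: "cnj \<in> borel_measurable borel"
      by (intro borel_measurable_continuous_onI continuous_intros)
    have dcm: "(\<lambda>p. cnj (dfun p1 p2 k p)) \<in> borel_measurable lborel"
      using measurable_compose[OF dm c0m] by simp
    have m1: "\<phi> \<in> borel_measurable lborel" by (rule L2T_meas[OF L])
    have m0: "\<phi>0 \<in> borel_measurable lborel" by (rule L2T_meas[OF L0])
    have inn: "innerT (dfun p1 p2 k) \<phi> = (c / c0) * innerT (dfun p1 p2 k) \<phi>0"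
    proof -
      have "(LINT p:Tbox|lborel. cnj (dfun p1 p2 k p) * \<phi> p)
          = (LINT p:Tbox|lborel. (c / c0) * (cnj (dfun p1 p2 k p) * \<phi>0 p))"
      proof (rule set_lebesgue_integral_cong_AE)
        show "Tbox \<in> sets lborel" by (rule Tbox_sets)
        show "(\<lambda>p. cnj (dfun p1 p2 k p) * \<phi> p) \<in> borel_measurable lborel" using dcm m1 by measurable
        show "(\<lambda>p. (c / c0) * (cnj (dfun p1 p2 k p) * \<phi>0 p)) \<in> borel_measurable lborel" using dcm m0 by measurable
        show "AE p\<in>Tbox in lborel. cnj (dfun p1 p2 k p) * \<phi> p = (c / c0) * (cnj (dfun p1 p2 k p) * \<phi>0 p)"
          using Ec E0 unfolding eqT_def proof eventually_elim
          case (elim p) thus ?case using c0nz by (auto simp: field_simps)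
        qed
      qed
      thus ?thesis unfolding innerT_def by simp
    qed
    define w where "w = (\<lambda>p. \<phi> p + (- (c * fhat \<upsilon> k)) * \<psi> p)"
    have wL: "L2T w" unfolding w_def by (rule L2T_comb[OF L psiL])
    have w0: "AE p in lborel. p \<in> Tbox \<longrightarrow> w p = 0"
      using Ec unfolding eqT_def by eventually_elim (auto simp: w_def algebra_simps)
    have Aphi: "A11 \<epsilon> u U k \<phi> p = complex_of_real (ffun \<epsilon> k p) * w p + c * fhat \<upsilon> k * A11 \<epsilon> u U k \<psi> p" for p
      using A11_lin[OF L psiL usum, where a="- (c * fhat \<upsilon> k)" and \<epsilon>=\<epsilon> and U=U and k=k and p=p] A11_null[OF w0, where \<epsilon>=\<epsilon> and u=u and U=U and k=k and p=p]
      unfolding w_def[symmetric] by (simp add: algebra_simps)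
    have E2: "AE p in lborel. p \<in> Tbox \<longrightarrow> A11 \<epsilon> u U k \<psi> p - lam * \<psi> p = dfun p1 p2 k p"
      using psi(2) unfolding eqT_def by simp
    have first: "eqT (fst (Afull \<epsilon> hb u \<upsilon> p1 p2 U k (\<phi>, z))) (\<lambda>p. lam * fst (\<phi>, z) p)"
      unfolding eqT_def Afull_def fst_conv snd_conv
      using w0 E2 Ec unfolding eqT_def proof eventually_elim
      case (elim p)
      show ?case
      proof
        assume pT: "p \<in> Tbox"
        have "A11 \<epsilon> u U k \<phi> p = c * fhat \<upsilon> k * (lam * \<psi> p + dfun p1 p2 k p)"
          using elim pT Aphi[of p] by (simp add: algebra_simps)
        thus "A11 \<epsilon> u U k \<phi> p + fhat \<upsilon> k * z * dfun p1 p2 k p = lam * \<phi> p"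
          using elim pT zc by (simp add: algebra_simps)
      qed
    qed
    have second: "snd (Afull \<epsilon> hb u \<upsilon> p1 p2 U k (\<phi>, z)) = lam * snd (\<phi>, z)"
    proof -
      have "snd (Afull \<epsilon> hb u \<upsilon> p1 p2 U k (\<phi>, z))
          = (c / c0) * (fhat \<upsilon> k * innerT (dfun p1 p2 k) \<phi>0) + complex_of_real (bfun hb \<epsilon> k) * z"
        unfolding Afull_def snd_conv fst_conv inn by (simp add: algebra_simps)
      also have "fhat \<upsilon> k * innerT (dfun p1 p2 k) \<phi>0 = (lam - complex_of_real (bfun hb \<epsilon> k)) * z0"
        using S0 by (simp add: algebra_simps)
      finally have X: "snd (Afull \<epsilon> hb u \<upsilon> p1 p2 U k (\<phi>, z))
          = (c / c0) * ((lam - complex_of_real (bfun hb \<epsilon> k)) * z0) + complex_of_real (bfun hb \<epsilon> k) * z" .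
      have z0: "z0 = - c0" unfolding c0_def by simp
      have Y: "(c / c0) * ((lam - complex_of_real (bfun hb \<epsilon> k)) * z0) = - c * (lam - complex_of_real (bfun hb \<epsilon> k))"
        unfolding z0 using c0nz by (simp add: field_simps)
      have "snd (Afull \<epsilon> hb u \<upsilon> p1 p2 U k (\<phi>, z)) = - c * (lam - complex_of_real (bfun hb \<epsilon> k)) + complex_of_real (bfun hb \<epsilon> k) * z"
        using X Y by simp
      thus ?thesis using zc by (simp add: algebra_simps)
    qed
    show "is_eigvec_A \<epsilon> hb u \<upsilon> p1 p2 U k lam (\<phi>, z)"
      unfolding is_eigvec_A_def using L first second by simp
  qed
qed

end
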